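(* Under the hypotheses of the previous lemma (standing assumptions, SLC and BUC, each $B_k$ nonnegative doubly stochastic scrambling with nonzero entries at least a fixed $\kappa>0$), and assuming the step sizes satisfy $\alpha_k>0$, $\alpha_{k+1}\le\alpha_k$ for all $k$, $\sum_k\alpha_k=\infty$ and $\sum_k\alpha_k^2<\infty$, the server iterates reach consensus asymptotically: $$\lim_{k\to\infty}\max_{I,G}\|x^I_{0,k}-x^G_{0,k}\|=0.$$
   Context: Standing setup. Integers $S\ge1$ (servers), $C\ge1$ (clients), $D\ge1$, $\Delta\ge1$. $\mathcal{X}\subseteq\mathbb{R}^D$ is a nonempty convex compact set and $\mathcal{P}_{\mathcal{X}}$ is Euclidean projection onto $\mathcal{X}$. For $h=1,\dots,C$, $f_h:\mathbb{R}^D\to\mathbb{R}$ is continuously differentiable and convex with gradient $g_h$; there are constants $L_h$ with $\|g_h(x)\|\le L_h$ for all $x\in\mathcal{X}$ and constants $N_h>0$ with $\|g_h(x)-g_h(y)\|\le N_h\|x-y\|$ for all $x,y\in\mathcal{X}$. Set $\mathbf{L}=\sum_h L_h$, $\mathbf{N}=\sum_h N_h$. Norms are Euclidean. Weight matrices $W_{i,k}\in\mathbb{R}^{S\times C}$ ($0\le i\le\Delta-1$, $k\ge0$), entries possibly negative. Symmetric Learning Condition (SLC): there is $M>0$ with $\sum_{i=1}^{\Delta}\sum_{J=1}^S W_{i-1,k}[J,h]=M$ for all $k\ge0$ and all $h$. Bounded Update Condition (BUC): there is $\bar M>0$ with $\sum_{i=1}^{\Delta}\sum_{J=1}^S |W_{i-1,k}[J,h]|\le\bar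 M$ for all $k,h$. Consensus matrices $B_k\in\mathbb{R}^{S\times S}$ have nonnegative entries. Iteration: given $x^J_{0,0}\in\mathcal{X}$ ($J=1,\dots,S$), for each $k\ge0$ and $i=1,\dots,\Delta$, $x^J_{i,k}=\mathcal{P}_{\mathcal{X}}\big[x^J_{i-1,k}-\alpha_k\sum_{h=1}^C W_{i-1,k}[J,h]\,g_h(x^J_{i-1,k})\big]$, and then $x^I_{0,k+1}=\sum_{J=1}^S B_k[I,J]\,x^J_{\Delta,k}$. A square matrix $B$ is scrambling if for every two rows $I,G$ there is a column $J$ with $B[I,J]>0$ and $B[G,J]>0$. *)

theory Defs
  imports "HOL-Analysis.Analysis"
begin

text \<open>Euclidean projection onto X: the library's closest_point.
  Square S x S matrices are represented as functions nat => nat => real with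
  indices ranging over {1..S}.\<close>

definition scrambling :: "nat \<Rightarrow> (nat \<Rightarrow> nat \<Rightarrow> real) \<Rightarrow> bool" where
  "scrambling S B \<longleftrightarrow>
     (\<forall>I\<in>{1..S}. \<forall>G\<in>{1..S}. \<exists>J\<in>{1..S}. B I J > 0 \<and> B G J > 0)"

definition doubly_stochastic :: "nat \<Rightarrow> (nat \<Rightarrow> nat \<Rightarrow> real) \<Rightarrow> bool" where
  "doubly_stochastic S B \<longleftrightarrow>
     (\<forall>I\<in>{1..S}. \<forall>J\<in>{1..S}. B I J \<ge> 0) \<and>
     (\<forall>I\<in>{1..S}. (\<Sum>J\<in>{1..S}. B I J) = 1) \<and>
     (\<forall>J\<in>{1..S}. (\<Sum>I\<in>{1..S}. B I J) = 1)"

end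

theory Submission
  imports Defs
begin

lemma contr_lim:
  fixes D a :: "nat \<Rightarrow> real"
  assumes Dnn: "\<And>k. D k \<ge> 0" and q0: "0 \<le> q" and q1: "q < 1" and a0: "a \<longlonglongrightarrow> 0"
    and rec: "\<And>k. D (Suc k) \<le> q * D k + a k"
  shows "D \<longlonglongrightarrow> 0"
proof (rule LIMSEQ_I)
  fix r :: real assume r: "0 < r"
  have "r * (1 - q) / 2 > 0" using r q1 by simp
  from LIMSEQ_D[OF a0 this] obtain k0 where k0: "\<And>k. k \<ge> k0 \<Longrightarrow> norm (a k) < r * (1 - q) / 2"
    by auto
  have ind: "D (k0 + n) \<le> q ^ n * D k0 + r / 2" for n
  proof (induction n)
    case 0 then show ?case using r by simp
  next
    case (Suc n)
    have "D (k0 + Suc n) \<le> q * D (k0 + n) + a (k0 + n)" using rec[of "k0+n"] by simp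
    also have "\<dots> \<le> q * (q ^ n * D k0 + r / 2) + r * (1 - q) / 2"
      using mult_left_mono[OF Suc q0] k0[of "k0+n"] by auto
    also have "\<dots> = q ^ Suc n * D k0 + r / 2" by (simp add: field_simps)
    finally show ?case .
  qed
  have "(\<lambda>n. q ^ n * D k0) \<longlonglongrightarrow> 0"
    using LIMSEQ_power_zero[of q] q0 q1 tendsto_mult[OF _ tendsto_const, of "\<lambda>n. q^n" 0 sequentially "D k0"]
    by simp
  from LIMSEQ_D[OF this, of "r/2"] r obtain n0 where n0: "\<And>n. n \<ge> n0 \<Longrightarrow> norm (q ^ n * D k0) < r / 2"
    by auto
  show "\<exists>no. \<forall>n\<ge>no. norm (D n - 0) < r"
  proof (intro exI allI impI)
    fix n assume n: "n \<ge> k0 + n0"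
    have "D n = D (k0 + (n - k0))" using n by simp
    also have "\<dots> \<le> q ^ (n - k0) * D k0 + r / 2" by (rule ind)
    also have "\<dots> < r"
    proof -
      have "norm (q ^ (n - k0) * D k0) < r / 2" using n0[of "n - k0"] n by auto
      moreover have "q ^ (n - k0) * D k0 \<le> norm (q ^ (n - k0) * D k0)" by simp
      ultimately show ?thesis by linarith
    qed
    finally show "norm (D n - 0) < r" using Dnn[of n] by simp
  qed
qed

lemma mix_scalar:
  fixes b c t :: "nat \<Rightarrow> real" and A :: "nat set"
  assumes fin: "finite A" and J0: "J0 \<in> A" and nb: "\<forall>J\<in>A. b J \<ge> 0" and nc: "\<forall>J\<in>A. c J \<ge> 0"
    and sb: "sum b A = 1" and sc: "sum c A = 1"
    and kb: "b J0 \<ge> \<kappa>" and kc: "c J0 \<ge> \<kappa>" and td: "\<forall>J\<in>A. \<forall>J'\<in>A. t J - t J' \<le> d"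
  shows "(\<Sum>J\<in>A. (b J - c J) * t J) \<le> (1 - \<kappa>) * d"
proof -
  define m where "m J = min (b J) (c J)" for J
  define s where "s = sum m A"
  define T where "T = Max (t ` A)"
  define \<tau> where "\<tau> = Min (t ` A)"
  have ne: "A \<noteq> {}" using J0 by auto
  have T: "\<forall>J\<in>A. t J \<le> T" using fin T_def by auto
  have \<tau>: "\<forall>J\<in>A. \<tau> \<le> t J" using fin \<tau>_def by auto
  have Tin: "T \<in> t ` A" using fin ne T_def by simp
  have \<tau>in: "\<tau> \<in> t ` A" using fin ne \<tau>_def by simp
  have Td: "T - \<tau> \<le> d" using td Tin \<tau>in by auto
  have Tt: "T - \<tau> \<ge> 0" using T \<tau> J0 by force
  have mnn: "\<forall>J\<in>A. m J \<ge> 0" using nb nc m_def by auto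
  have "m J0 \<le> s" unfolding s_def by (rule member_le_sum[OF J0]) (use mnn fin in auto)
  then have sk: "\<kappa> \<le> s" using kb kc m_def by auto
  have "b J0 \<le> sum b A" by (rule member_le_sum[OF J0]) (use nb fin in auto)
  then have k1: "\<kappa> \<le> 1" using kb sb by simp
  have e1: "(\<Sum>J\<in>A. (b J - c J) * t J) = (\<Sum>J\<in>A. (b J - m J) * t J) - (\<Sum>J\<in>A. (c J - m J) * t J)"
    unfolding sum_subtractf[symmetric] by (rule sum.cong) (auto simp: algebra_simps)
  have "(\<Sum>J\<in>A. (b J - m J) * t J) \<le> (\<Sum>J\<in>A. (b J - m J) * T)"
    by (rule sum_mono) (use T m_def in \<open>auto intro: mult_left_mono\<close>)
  also have "\<dots> = (1 - s) * T" by (simp add: sum_distrib_right[symmetric] sum_subtractf sb s_def)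
  finally have u: "(\<Sum>J\<in>A. (b J - m J) * t J) \<le> (1 - s) * T" .
  have "(\<Sum>J\<in>A. (c J - m J) * \<tau>) \<le> (\<Sum>J\<in>A. (c J - m J) * t J)"
    by (rule sum_mono) (use \<tau> m_def in \<open>auto intro: mult_left_mono\<close>)
  moreover have "(\<Sum>J\<in>A. (c J - m J) * \<tau>) = (1 - s) * \<tau>" by (simp add: sum_distrib_right[symmetric] sum_subtractf sc s_def)
  ultimately have v: "(1 - s) * \<tau> \<le> (\<Sum>J\<in>A. (c J - m J) * t J)" by simp
  have "(\<Sum>J\<in>A. (b J - c J) * t J) \<le> (1 - s) * (T - \<tau>)" using e1 u v by (simp add: algebra_simps)
  also have "\<dots> \<le> (1 - \<kappa>) * (T - \<tau>)" by (rule mult_right_mono) (use sk Tt in auto)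
  also have "\<dots> \<le> (1 - \<kappa>) * d" by (rule mult_left_mono) (use Td k1 in auto)
  finally show ?thesis .
qed

lemma mix_vec:
  fixes b c :: "nat \<Rightarrow> real" and A :: "nat set" and y :: "nat \<Rightarrow> 'a::real_inner"
  assumes fin: "finite A" and J0: "J0 \<in> A" and nb: "\<forall>J\<in>A. b J \<ge> 0" and nc: "\<forall>J\<in>A. c J \<ge> 0"
    and sb: "sum b A = 1" and sc: "sum c A = 1"
    and kb: "b J0 \<ge> \<kappa>" and kc: "c J0 \<ge> \<kappa>" and yd: "\<forall>J\<in>A. \<forall>J'\<in>A. norm (y J - y J') \<le> d"
  shows "norm (\<Sum>J\<in>A. (b J - c J) *\<^sub>R y J) \<le> (1 - \<kappa>) * d"
proof -
  define z where "z = (\<Sum>J\<in>A. (b J - c J) *\<^sub>R y J)"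
  have "b J0 \<le> sum b A" by (rule member_le_sum[OF J0]) (use nb fin in auto)
  then have k1: "\<kappa> \<le> 1" using kb sb by simp
  have d0: "d \<ge> 0" using yd J0 by force
  have "(norm z)\<^sup>2 = z \<bullet> z" by (simp add: power2_norm_eq_inner)
  also have "\<dots> = (\<Sum>J\<in>A. (b J - c J) * (y J \<bullet> z))"
  proof -
    have "(\<Sum>J\<in>A. (b J - c J) * (y J \<bullet> z)) = (\<Sum>J\<in>A. (b J - c J) *\<^sub>R y J) \<bullet> z"
      by (simp add: inner_sum_left)
    then show ?thesis using z_def by simp
  qed
  also have "\<dots> \<le> (1 - \<kappa>) * (d * norm z)"
  proof (rule mix_scalar[OF fin J0 nb nc sb sc kb kc])
    show "\<forall>J\<in>A. \<forall>J'\<in>A. y J \<bullet> z - y J' \<bullet> z \<le> d * norm z"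
    proof (intro ballI)
      fix J J' assume "J \<in> A" "J' \<in> A"
      have "y J \<bullet> z - y J' \<bullet> z = (y J - y J') \<bullet> z" by (simp add: inner_diff_left)
      also have "\<dots> \<le> norm (y J - y J') * norm z" by (rule norm_cauchy_schwarz)
      also have "\<dots> \<le> d * norm z" by (rule mult_right_mono) (use yd \<open>J \<in> A\<close> \<open>J' \<in> A\<close> in auto)
      finally show "y J \<bullet> z - y J' \<bullet> z \<le> d * norm z" .
    qed
  qed
  finally have h: "norm z * norm z \<le> ((1 - \<kappa>) * d) * norm z" by (simp add: power2_eq_square algebra_simps)
  show ?thesis
  proof (cases "norm z = 0")
    case True then show ?thesis using k1 d0 z_def by simp
  next
    case False then have "norm z > 0" by simp
    with h show ?thesis using z_def by (simp add: mult_le_cancel_right)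
  qed
qed

theorem claim1:
  fixes S C \<Delta> :: nat
    and X :: "'a::euclidean_space set"
    and f :: "nat \<Rightarrow> 'a \<Rightarrow> real" and g :: "nat \<Rightarrow> 'a \<Rightarrow> 'a"
    and L N :: "nat \<Rightarrow> real"
    and W :: "nat \<Rightarrow> nat \<Rightarrow> nat \<Rightarrow> nat \<Rightarrow> real"
    and M Mbar \<kappa> :: real
    and B :: "nat \<Rightarrow> nat \<Rightarrow> nat \<Rightarrow> real"
    and \<alpha> :: "nat \<Rightarrow> real"
    and x :: "nat \<Rightarrow> nat \<Rightarrow> nat \<Rightarrow> 'a"
  assumes S_pos: "S \<ge> 1" and C_pos: "C \<ge> 1" and Delta_pos: "\<Delta> \<ge> 1"
    and X_ne: "X \<noteq> {}" and X_convex: "convex X" and X_compact: "compact X"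
    and f_deriv: "\<And>h y. h \<in> {1..C} \<Longrightarrow> (f h has_derivative (\<lambda>v. g h y \<bullet> v)) (at y)"
    and g_cont: "\<And>h. h \<in> {1..C} \<Longrightarrow> continuous_on UNIV (g h)"
    and f_convex: "\<And>h. h \<in> {1..C} \<Longrightarrow> convex_on UNIV (f h)"
    and g_bound: "\<And>h y. h \<in> {1..C} \<Longrightarrow> y \<in> X \<Longrightarrow> norm (g h y) \<le> L h"
    and N_pos: "\<And>h. h \<in> {1..C} \<Longrightarrow> N h > 0"
    and g_lip: "\<And>h y z. h \<in> {1..C} \<Longrightarrow> y \<in> X \<Longrightarrow> z \<in> X \<Longrightarrow>
                  norm (g h y - g h z) \<le> N h * norm (y - z)"
    and SLC: "M > 0" "\<And>k h. h \<in> {1..C} \<Longrightarrow>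
                (\<Sum>i\<in>{1..\<Delta>}. \<Sum>J\<in>{1..S}. W (i - 1) k J h) = M"
    and BUC: "Mbar > 0" "\<And>k h. h \<in> {1..C} \<Longrightarrow>
                (\<Sum>i\<in>{1..\<Delta>}. \<Sum>J\<in>{1..S}. \<bar>W (i - 1) k J h\<bar>) \<le> Mbar"
    and B_ds: "\<And>k. doubly_stochastic S (B k)"
    and B_scr: "\<And>k. scrambling S (B k)"
    and kappa_pos: "\<kappa> > 0"
    and B_kappa: "\<And>k I J. I \<in> {1..S} \<Longrightarrow> J \<in> {1..S} \<Longrightarrow> B k I J \<noteq> 0 \<Longrightarrow> B k I J \<ge> \<kappa>"
    and alpha_pos: "\<And>k. \<alpha> k > 0"
    and alpha_mono: "\<And>k. \<alpha> (Suc k) \<le> \<alpha> k"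
    and alpha_div: "\<not> summable \<alpha>"
    and alpha_sq: "summable (\<lambda>k. (\<alpha> k)\<^sup>2)"
    and x_init: "\<And>J. J \<in> {1..S} \<Longrightarrow> x J 0 0 \<in> X"
    and x_step: "\<And>J i k. J \<in> {1..S} \<Longrightarrow> i \<in> {1..\<Delta>} \<Longrightarrow>
        x J i k = closest_point X (x J (i - 1) k
                    - \<alpha> k *\<^sub>R (\<Sum>h\<in>{1..C}. W (i - 1) k J h *\<^sub>R g h (x J (i - 1) k)))"
    and x_cons: "\<And>I k. I \<in> {1..S} \<Longrightarrow>
        x I 0 (Suc k) = (\<Sum>J\<in>{1..S}. B k I J *\<^sub>R x J \<Delta> k)"
  shows "(\<lambda>k. Max {norm (x I 0 k - x G 0 k) | I G. I \<in> {1..S} \<and> G \<in> {1..S}})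
           \<longlonglongrightarrow> 0"
  proof -
  define K where "K = Mbar * (\<Sum>h\<in>{1..C}. L h)"
  define D where "D k = Max {norm (x I 0 k - x G 0 k) | I G. I \<in> {1..S} \<and> G \<in> {1..S}}" for k
  have closedX: "closed X" using X_compact compact_imp_closed by blast
  obtain x0 where x0: "x0 \<in> X" using X_ne by auto
  have Lnn: "0 \<le> L h" if "h \<in> {1..C}" for h
    using g_bound[OF that x0] norm_ge_zero order_trans by blast
  have xX0: "x J 0 k \<in> X" if "J \<in> {1..S}" for J k
    using that
  proof (induction k arbitrary: J)
    case 0 then show ?case using x_init by simp
  next
    case (Suc k)
    have D1: "\<Delta> \<in> {1..\<Delta>}" using Delta_pos by simp
    have "x J' \<Delta> k \<in> X" if "J' \<in> {1..S}" for J'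
      using x_step[OF that D1] closest_point_in_set[OF closedX X_ne] by simp
    moreover have "(\<Sum>J'\<in>{1..S}. B k J J') = 1" "\<And>J'. J' \<in> {1..S} \<Longrightarrow> B k J J' \<ge> 0"
      using B_ds[of k] Suc.prems unfolding doubly_stochastic_def by auto
    ultimately show ?case
      using x_cons[OF Suc.prems, of k] convex_sum[OF _ X_convex, of "{1..S}" "B k J" "\<lambda>J'. x J' \<Delta> k"] by simp
  qed
  have xXi: "x J i k \<in> X" if "J \<in> {1..S}" "i \<le> \<Delta>" for J i k
  proof (cases "i = 0")
    case True then show ?thesis using xX0 that by simp
  next
    case False
    then have "i \<in> {1..\<Delta>}" using that by simp
    then show ?thesis using x_step[OF that(1)] closest_point_in_set[OF closedX X_ne] by simp
  qed
  have step: "norm (x J i k - x J (i - 1) k) \<le> \<alpha> k * (\<Sum>h\<in>{1..C}. \<bar>W (i - 1) k J h\<bar> * L h)"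
    if J: "J \<in> {1..S}" and i: "i \<in> {1..\<Delta>}" for J i k
  proof -
    define v where "v = x J (i - 1) k"
    define s where "s = (\<Sum>h\<in>{1..C}. W (i - 1) k J h *\<^sub>R g h v)"
    have vX: "v \<in> X" unfolding v_def using xXi[OF J, of "i - 1" k] i by fastforce
    have "norm (x J i k - x J (i - 1) k) = dist (closest_point X (v - \<alpha> k *\<^sub>R s)) (closest_point X v)"
      using x_step[OF J i] closest_point_self[OF vX] by (simp add: v_def s_def dist_norm)
    also have "\<dots> \<le> dist (v - \<alpha> k *\<^sub>R s) v" by (rule closest_point_lipschitz[OF X_convex closedX X_ne])
    also have "\<dots> = \<alpha> k * norm s" using alpha_pos[of k] by (simp add: dist_norm)
    also have "\<dots> \<le> \<alpha> k * (\<Sum>h\<in>{1..C}. \<bar>W (i - 1) k J h\<bar> * L h)"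
    proof (rule mult_left_mono)
      have "norm s \<le> (\<Sum>h\<in>{1..C}. norm (W (i - 1) k J h *\<^sub>R g h v))" unfolding s_def by (rule norm_sum)
      also have "\<dots> \<le> (\<Sum>h\<in>{1..C}. \<bar>W (i - 1) k J h\<bar> * L h)"
        by (rule sum_mono) (use g_bound vX in \<open>auto intro: mult_left_mono\<close>)
      finally show "norm s \<le> (\<Sum>h\<in>{1..C}. \<bar>W (i - 1) k J h\<bar> * L h)" .
    qed (use alpha_pos[of k] in simp)
    finally show ?thesis .
  qed
  have driftn: "norm (x J n k - x J 0 k) \<le> \<alpha> k * (\<Sum>i\<in>{1..n}. \<Sum>h\<in>{1..C}. \<bar>W (i - 1) k J h\<bar> * L h)"
    if J: "J \<in> {1..S}" and n: "n \<le> \<Delta>" for J n k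
    using n
  proof (induction n)
    case 0 then show ?case by simp
  next
    case (Suc n)
    have "norm (x J (Suc n) k - x J 0 k) \<le> norm (x J (Suc n) k - x J n k) + norm (x J n k - x J 0 k)"
      by (rule norm_diff_triangle_ineq[of _ _ _ _, THEN order_trans[rotated]]) simp
    also have "\<dots> \<le> \<alpha> k * (\<Sum>h\<in>{1..C}. \<bar>W n k J h\<bar> * L h) + \<alpha> k * (\<Sum>i\<in>{1..n}. \<Sum>h\<in>{1..C}. \<bar>W (i - 1) k J h\<bar> * L h)"
      using step[OF J, of "Suc n" k] Suc by simp
    also have "\<dots> = \<alpha> k * (\<Sum>i\<in>{1..Suc n}. \<Sum>h\<in>{1..C}. \<bar>W (i - 1) k J h\<bar> * L h)"
      by (simp add: algebra_simps)
    finally show ?case .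
  qed
  have Wsum: "(\<Sum>i\<in>{1..\<Delta>}. \<Sum>h\<in>{1..C}. \<bar>W (i - 1) k J h\<bar> * L h) \<le> K"
    if J: "J \<in> {1..S}" for J k
  proof -
    have "(\<Sum>i\<in>{1..\<Delta>}. \<Sum>h\<in>{1..C}. \<bar>W (i - 1) k J h\<bar> * L h)
          = (\<Sum>h\<in>{1..C}. L h * (\<Sum>i\<in>{1..\<Delta>}. \<bar>W (i - 1) k J h\<bar>))"
      by (subst sum.swap) (simp add: sum_distrib_left mult.commute)
    also have "\<dots> \<le> (\<Sum>h\<in>{1..C}. L h * Mbar)"
    proof (rule sum_mono)
      fix h assume h: "h \<in> {1..C}"
      have "(\<Sum>i\<in>{1..\<Delta>}. \<bar>W (i - 1) k J h\<bar>) \<le> (\<Sum>i\<in>{1..\<Delta>}. \<Sum>J'\<in>{1..S}. \<bar>W (i - 1) k J' h\<bar>)"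
        by (rule sum_mono, rule member_le_sum) (use J in auto)
      also have "\<dots> \<le> Mbar" using BUC(2)[OF h] by simp
      finally show "L h * (\<Sum>i\<in>{1..\<Delta>}. \<bar>W (i - 1) k J h\<bar>) \<le> L h * Mbar"
        using Lnn[OF h] by (simp add: mult_left_mono)
    qed
    also have "\<dots> = K" by (simp add: K_def sum_distrib_left mult.commute)
    finally show ?thesis .
  qed
  have drift: "norm (x J \<Delta> k - x J 0 k) \<le> K * \<alpha> k" if J: "J \<in> {1..S}" for J k
    using driftn[OF J order_refl, of k] Wsum[OF J, of k] alpha_pos[of k]
    by (smt (verit, best) mult.commute mult_left_mono)
  have setq: "{norm (x I 0 k - x G 0 k) | I G. I \<in> {1..S} \<and> G \<in> {1..S}}
       = (\<lambda>(I, G). norm (x I 0 k - x G 0 k)) ` ({1..S} \<times> {1..S})" for k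
    by (auto; blast)
  have fin: "finite {norm (x I 0 k - x G 0 k) | I G. I \<in> {1..S} \<and> G \<in> {1..S}}" for k
    unfolding setq by simp
  have nem: "{norm (x I 0 k - x G 0 k) | I G. I \<in> {1..S} \<and> G \<in> {1..S}} \<noteq> {}" for k
    unfolding setq using S_pos by auto
  have Dge: "norm (x I 0 k - x G 0 k) \<le> D k" if "I \<in> {1..S}" "G \<in> {1..S}" for I G k
    unfolding D_def by (rule Max_ge[OF fin]) (use that in blast)
  have Dnn: "0 \<le> D k" for k using Dge[of 1 1 k] S_pos by simp
  obtain J1 where J1: "J1 \<in> {1..S}" "B 0 1 J1 > 0"
    using B_scr[of 0] S_pos unfolding scrambling_def by force
  have k1: "\<kappa> \<le> 1"
  proof -
    have "B 0 1 J1 \<le> (\<Sum>J\<in>{1..S}. B 0 1 J)"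
      by (rule member_le_sum[OF J1(1)]) (use B_ds[of 0] S_pos in \<open>auto simp: doubly_stochastic_def\<close>)
    also have "\<dots> = 1" using B_ds[of 0] S_pos by (auto simp: doubly_stochastic_def)
    finally show ?thesis using B_kappa[of 1 J1 0] J1 S_pos by simp
  qed
  have rec: "D (Suc k) \<le> (1 - \<kappa>) * D k + (1 - \<kappa>) * (2 * K) * \<alpha> k" for k
  proof -
    have "D (Suc k) \<le> (1 - \<kappa>) * (D k + 2 * K * \<alpha> k)"
      unfolding D_def[of "Suc k"]
    proof (rule Max.boundedI[OF fin nem], clarify)
      fix I G assume I: "I \<in> {1..S}" and G: "G \<in> {1..S}"
      have eq: "x I 0 (Suc k) - x G 0 (Suc k) = (\<Sum>J\<in>{1..S}. (B k I J - B k G J) *\<^sub>R x J \<Delta> k)"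
        using x_cons[OF I] x_cons[OF G] by (simp add: sum_subtractf[symmetric] scaleR_diff_left)
      obtain J0 where J0: "J0 \<in> {1..S}" "B k I J0 > 0" "B k G J0 > 0"
        using B_scr[of k] I G unfolding scrambling_def by blast
      have ds: "\<forall>J\<in>{1..S}. B k I J \<ge> 0" "\<forall>J\<in>{1..S}. B k G J \<ge> 0"
        "sum (B k I) {1..S} = 1" "sum (B k G) {1..S} = 1"
        using B_ds[of k] I G unfolding doubly_stochastic_def by auto
      have yd: "\<forall>J\<in>{1..S}. \<forall>J'\<in>{1..S}. norm (x J \<Delta> k - x J' \<Delta> k) \<le> D k + 2 * K * \<alpha> k"
      proof (intro ballI)
        fix J J' assume J: "J \<in> {1..S}" and J': "J' \<in> {1..S}"
        have "norm (x J \<Delta> k - x J' \<Delta> k) \<le> norm (x J \<Delta> k - x J 0 k) + norm (x J 0 k - x J' 0 k) + norm (x J' \<Delta> k - x J' 0 k)"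
          by (smt (verit, best) norm_diff_triangle_ineq norm_minus_commute diff_add_cancel norm_triangle_ineq4)
        then show "norm (x J \<Delta> k - x J' \<Delta> k) \<le> D k + 2 * K * \<alpha> k"
          using drift[OF J, of k] drift[OF J', of k] Dge[OF J J', of k] by simp
      qed
      show "norm (x I 0 (Suc k) - x G 0 (Suc k)) \<le> (1 - \<kappa>) * (D k + 2 * K * \<alpha> k)"
        unfolding eq
        by (rule mix_vec[OF _ J0(1) ds _ _ yd]) (use B_kappa[of I J0 k] B_kappa[of G J0 k] I G J0 in auto)
    qed
    then show ?thesis by (simp add: algebra_simps)
  qed
  have a0: "\<alpha> \<longlonglongrightarrow> 0"
  proof -
    have "(\<lambda>k. (\<alpha> k)\<^sup>2) \<longlonglongrightarrow> 0" by (rule summable_LIMSEQ_zero[OF alpha_sq])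
    then have "(\<lambda>k. sqrt ((\<alpha> k)\<^sup>2)) \<longlonglongrightarrow> sqrt 0" by (rule tendsto_real_sqrt)
    then show ?thesis using alpha_pos by (simp add: less_imp_le)
  qed
  have "(\<lambda>k. (1 - \<kappa>) * (2 * K) * \<alpha> k) \<longlonglongrightarrow> (1 - \<kappa>) * (2 * K) * 0"
    by (intro tendsto_mult tendsto_const a0)
  then have a1: "(\<lambda>k. (1 - \<kappa>) * (2 * K) * \<alpha> k) \<longlonglongrightarrow> 0" by simp
  have "D \<longlonglongrightarrow> 0"
    by (rule contr_lim[OF Dnn _ _ a1 rec]) (use k1 kappa_pos in auto)
  moreover have "(\<lambda>k. Max {norm (x I 0 k - x G 0 k) | I G. I \<in> {1..S} \<and> G \<in> {1..S}}) = D"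
    by (rule ext) (simp add: D_def)
  ultimately show ?thesis by simp
qed

end
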